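(* For $j\in\mathbb{Z}_{\ge0}$, \[ C_j(x)=\frac{q^{-1}\lambda}{1+q^{-1}x}B_j(x)+\frac{\beta_E(j)\beta_E(j+1)-q^{-1}\lambda\,\beta_E(j)^2}{1+q^{-1}x}, \] where $B_j(x)=\sum_{l\ge0}\beta_E(l+j)^2x^l$ and $C_j(x)=\sum_{l\ge0}\beta_E(l+j+1)\beta_E(l+j)x^l$ (formal power series in $x$).
   Context: $F$ is a $p$-adic field with odd residue cardinality $q$, uniformizer $\varpi$. $\pi$ is an irreducible unitary unramified representation of $\mathrm{GL}_2(F)$ with trivial central character, a quotient of $\chi\times\chi^{-1}$ with $\chi$ unramified; $\alpha=\chi(\varpi)$ and $\lambda=q^{1/2}(\alpha+\alpha^{-1})\in\mathbb{R}$. $\phi$ is the spherical unit vector, $E$ a quadratic étale algebra over $F$, $\alpha_E(\phi_1,\phi_2)=\int_{F^\times\backslash E^\times}\langle\pi(t)\phi_1,\phi_2\rangle d^\times t$ with $\alpha_E(\phi,\phi)\ne0$, and $\beta_E(l)=\alpha_E(\pi(\mathrm{diag}(\varpi^{-l},1))\phi,\phi)/\alpha_E(\phi,\phi)$. These satisfy $q\beta_E(l+2)-\lambda\beta_E(l+1)+\beta_E(l)=0$ for $l\ge0$, $\beta_E(0)=1$. *)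

theory Defs
  imports Complex_Main "HOL-Computational_Algebra.Formal_Power_Series"
    "HOL-Computational_Algebra.Primes"
begin

definition B_ser :: "(nat \<Rightarrow> complex) \<Rightarrow> nat \<Rightarrow> complex fps" where
  "B_ser beta j = Abs_fps (\<lambda>l. beta (l + j) ^ 2)"

definition C_ser :: "(nat \<Rightarrow> complex) \<Rightarrow> nat \<Rightarrow> complex fps" where
  "C_ser beta j = Abs_fps (\<lambda>l. beta (l + j + 1) * beta (l + j))"

end

theory Submission
  imports Defs
begin

theorem lemma4p2:
  fixes q :: nat and lam :: real and beta :: "nat \<Rightarrow> complex" and j :: nat
  assumes q_pp: "\<exists>p k. prime p \<and> 0 < k \<and> q = p ^ k"
    and q_odd: "odd q"
    and rec: "\<forall>l. of_nat q * beta (l + 2) - complex_of_real lam * beta (l + 1) + beta l = 0"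
    and beta0: "beta 0 = 1"
  shows "C_ser beta j =
    fps_const (complex_of_real lam / of_nat q) * B_ser beta j / (1 + fps_const (1 / of_nat q) * fps_X)
    + fps_const (beta j * beta (j + 1) - complex_of_real lam / of_nat q * beta j ^ 2)
        / (1 + fps_const (1 / of_nat q) * fps_X)"
proof -
  define D :: "complex fps" where "D = 1 + fps_const (1 / of_nat q) * fps_X"
  define A where "A = fps_const (complex_of_real lam / of_nat q) * B_ser beta j"
  define K where "K = fps_const (beta j * beta (j + 1) - complex_of_real lam / of_nat q * beta j ^ 2)"
  have q0: "(of_nat q :: complex) \<noteq> 0" using q_odd by (metis of_nat_eq_0_iff odd_pos less_irrefl)
  have D0: "fps_nth D 0 \<noteq> 0" by (simp add: D_def)
  have key: "C_ser beta j * D = A + K"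
  proof (rule fps_ext)
    fix n
    have CD: "C_ser beta j * D = C_ser beta j + fps_const (1 / of_nat q) * (fps_X * C_ser beta j)"
      by (simp add: D_def algebra_simps)
    show "fps_nth (C_ser beta j * D) n = fps_nth (A + K) n"
    proof (cases n)
      case 0
      then show ?thesis unfolding CD by (simp add: A_def K_def C_ser_def B_ser_def fps_X_mult_nth)
    next
      case (Suc m)
      have r: "of_nat q * beta (m + j + 2) = complex_of_real lam * beta (m + j + 1) - beta (m + j)"
        using rec[rule_format, of "m + j"] by (simp add: algebra_simps)
      have "beta (m + j + 2) = (complex_of_real lam * beta (m + j + 1) - beta (m + j)) / of_nat q"
        using r q0 by (simp add: field_simps)
      then show ?thesis unfolding CD using Suc q0
        apply (simp add: A_def K_def C_ser_def B_ser_def fps_X_mult_nth field_simps power2_eq_square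
              add.commute add.left_commute)
        apply (drule arg_cong[where f="\<lambda>t. beta (Suc (j + m)) * t"])
        apply (simp add: algebra_simps)
        done
    qed
  qed
  have "(A + K) / D = C_ser beta j"
    using key D0 by (simp add: fps_divide_unit mult.assoc inverse_mult_eq_1' flip: key)
  moreover have "(A + K) / D = A / D + K / D"
    using D0 by (simp add: fps_divide_unit distrib_right)
  ultimately show ?thesis by (simp add: A_def K_def D_def)
qed

end
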